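(* For any pair of rooted trees $T_1,T_2$ on leaf set $[n]$, the cone $K_{T_1}+K_{T_2}$, considered in $\mathbb{R}^{\binom{[n]}{2}}/\mathbb{R}(1,\dots,1)^T$, is a simplicial cone generated by $\{-v_C\}_{C\in\mathrm{clade}^\circ(T_1)\cup\mathrm{clade}^\circ(T_2)}$; that is, $K_{T_1}+K_{T_2}=\mathbb{R}(1,\dots,1)^T+\mathrm{cone}\{-v_C: C\in\mathrm{clade}^\circ(T_1)\cup\mathrm{clade}^\circ(T_2)\}$, and the images of these generators in the quotient $\mathbb{R}^{\binom{[n]}{2}}/\mathbb{R}(1,\dots,1)^T$ are linearly independent.
   Context: A rooted tree on leaf set $[n]$ has leaves labeled bijectively by $[n]$ and internal vertices each with at least two children. A clade of $T$ is the set of leaves below an internal vertex; $\mathrm{clade}(T)$ is the set of clades and $\mathrm{clade}^\circ(T)=\mathrm{clade}(T)\setminus\{[n]\}$. For $C\subseteq[n]$, $v_C\in\mathbb{R}^{\binom{[n]}{2}}$ is the characteristic vector of $\binom{C}{2}$. An ultrametric is $\delta\in\mathbb{R}^{\binom{[n]}{2}}$ with $\delta_{uv}\le\max\{\delta_{uw},\delta_{vw}\}$ for all distinct $u,v,w$. $K_T$ is the set of $\delta$ such that there are real weights on the internal vertices of $T$, weakly increasing along every path toward the root, with $\delta_{uv}$ equal to the weight of the most recent common ancestor of $u$ and $v$; $K_{T_1}+K_{T_2}$ is the Minkowski sum. *)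

theory Defs
  imports "HOL-Analysis.Analysis"
begin

text \<open>Coordinates of \<open>\<real>^(binom [n] 2)\<close>: the 2-element subsets of \<open>[n] = {1..n}\<close>.\<close>

definition pairs :: "nat \<Rightarrow> nat set set" where
  "pairs n = {e. e \<subseteq> {1..n} \<and> card e = 2}"

definition vec_space :: "nat \<Rightarrow> (nat set \<Rightarrow> real) set" where
  "vec_space n = {x. \<forall>e. e \<notin> pairs n \<longrightarrow> x e = 0}"

definition ones :: "nat \<Rightarrow> nat set \<Rightarrow> real" where
  "ones n = (\<lambda>e. if e \<in> pairs n then 1 else 0)"

definition charvec :: "nat \<Rightarrow> nat set \<Rightarrow> nat set \<Rightarrow> real" where
  "charvec n C = (\<lambda>e. if e \<in> pairs n \<and> e \<subseteq> C then 1 else 0)"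

text \<open>A rooted tree on leaf set \<open>[n]\<close> (internal vertices with at least two children)
  is encoded by its set of clades, i.e. a hierarchy on \<open>[n]\<close>: a laminar family of subsets
  of \<open>[n]\<close> of size at least 2 containing \<open>[n]\<close> (when \<open>n \<ge> 2\<close>). Internal vertices
  correspond bijectively to clades.\<close>
definition rooted_tree :: "nat \<Rightarrow> nat set set \<Rightarrow> bool" where
  "rooted_tree n H \<longleftrightarrow>
     (\<forall>C\<in>H. C \<subseteq> {1..n} \<and> 2 \<le> card C) \<and>
     (n \<ge> 2 \<longrightarrow> {1..n} \<in> H) \<and>
     (\<forall>C\<in>H. \<forall>D\<in>H. C \<subseteq> D \<or> D \<subseteq> C \<or> C \<inter> D = {})"

definition proper_clades :: "nat \<Rightarrow> nat set set \<Rightarrow> nat set set" where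
  "proper_clades n H = H - {{1..n}}"

definition mrca :: "nat set set \<Rightarrow> nat set \<Rightarrow> nat set" where
  "mrca H e = \<Inter>{C\<in>H. e \<subseteq> C}"

text \<open>\<open>K_T\<close>: weights on internal vertices (clades), weakly increasing towards the root
  (i.e. monotone w.r.t. inclusion of clades), \<open>\<delta>_{uv}\<close> = weight of mrca of u and v.\<close>
definition K :: "nat \<Rightarrow> nat set set \<Rightarrow> (nat set \<Rightarrow> real) set" where
  "K n H = {\<delta> \<in> vec_space n. \<exists>w :: nat set \<Rightarrow> real.
              (\<forall>C\<in>H. \<forall>D\<in>H. C \<subseteq> D \<longrightarrow> w C \<le> w D) \<and>
              (\<forall>e\<in>pairs n. \<delta> e = w (mrca H e))}"

definition minkowski_sum :: "('b \<Rightarrow> real) set \<Rightarrow> ('b \<Rightarrow> real) set \<Rightarrow> ('b \<Rightarrow> real) set" where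
  "minkowski_sum A B = {(\<lambda>e. x e + y e) | x y. x \<in> A \<and> y \<in> B}"

definition cone_gen :: "'i set \<Rightarrow> ('i \<Rightarrow> 'b \<Rightarrow> real) \<Rightarrow> ('b \<Rightarrow> real) set" where
  "cone_gen I g = {(\<lambda>e. \<Sum>i\<in>I. c i * g i e) | c. \<forall>i\<in>I. c i \<ge> 0}"

end

theory Submission
  imports Defs
begin

definition lam :: "nat set set \<Rightarrow> bool" where
  "lam H \<longleftrightarrow> (\<forall>C\<in>H. \<forall>D\<in>H. C \<subseteq> D \<or> D \<subseteq> C \<or> C \<inter> D = {})"

lemma chain_Inter_mem:
  fixes S :: "'a set set"
  assumes "finite S" "S \<noteq> {}" "\<forall>A\<in>S. \<forall>B\<in>S. A \<subseteq> B \<or> B \<subseteq> A"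
  shows "\<Inter>S \<in> S"
  using assms
proof (induction S rule: finite_ne_induct)
  case (singleton x) then show ?case by simp
next
  case (insert x F)
  then have "\<Inter>F \<in> F" by blast
  moreover have "x \<subseteq> \<Inter>F \<or> \<Inter>F \<subseteq> x" using insert.prems \<open>\<Inter>F \<in> F\<close> by blast
  ultimately show ?case by (auto simp: Int_absorb1 Int_absorb2)
qed

lemma chain_Union_mem:
  fixes S :: "'a set set"
  assumes "finite S" "S \<noteq> {}" "\<forall>A\<in>S. \<forall>B\<in>S. A \<subseteq> B \<or> B \<subseteq> A"
  shows "\<Union>S \<in> S"
  using assms
proof (induction S rule: finite_ne_induct)
  case (singleton x) then show ?case by simp
next
  case (insert x F)
  then have "\<Union>F \<in> F" by blast
  moreover have "x \<subseteq> \<Union>F \<or> \<Union>F \<subseteq> x" using insert.prems \<open>\<Union>F \<in> F\<close> by blast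
  ultimately show ?case by (auto simp: Un_absorb1 Un_absorb2)
qed

lemma lam_nested:
  assumes "lam H" "C \<in> H" "D \<in> H" "x \<in> C" "x \<in> D"
  shows "C \<subseteq> D \<or> D \<subseteq> C"
  using assms unfolding lam_def by blast

lemma lam_subset: "lam H \<Longrightarrow> G \<subseteq> H \<Longrightarrow> lam G"
  unfolding lam_def by blast

lemma uncovered:
  assumes fin1: "finite L1" and fin2: "finite L2" and lam1: "lam L1" and lam2: "lam L2"
    and C: "2 \<le> card C" and nc: "\<forall>D\<in>L1 \<union> L2. \<not> C \<subseteq> D"
  shows "\<exists>x y. x \<in> C \<and> y \<in> C \<and> x \<noteq> y \<and> (\<forall>D\<in>L1 \<union> L2. \<not> (x \<in> D \<and> y \<in> D))"
proof (rule ccontr)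
  assume H0: "\<not> ?thesis"
  have H: "\<And>x y. x \<in> C \<Longrightarrow> y \<in> C \<Longrightarrow> x \<noteq> y \<Longrightarrow> \<exists>D\<in>L1 \<union> L2. x \<in> D \<and> y \<in> D"
    using H0 by blast
  have finC: "finite C" using C by (metis card.infinite not_numeral_le_zero)
  obtain x where xC: "x \<in> C" using C by fastforce
  define S1 where "S1 = {D\<in>L1. x \<in> D}"
  define M where "M = \<Union>S1 \<union> {x}"
  have "\<exists>y0\<in>C. y0 \<notin> M"
  proof (cases "S1 = {}")
    case True
    then have "M = {x}" unfolding M_def by simp
    moreover have "C \<noteq> {x}" using C by auto
    ultimately show ?thesis using xC by blast
  next
    case False
    have ch: "\<forall>A\<in>S1. \<forall>B\<in>S1. A \<subseteq> B \<or> B \<subseteq> A"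
      unfolding S1_def using lam_nested[OF lam1] by blast
    have "\<Union>S1 \<in> S1" by (rule chain_Union_mem) (use fin1 False ch in \<open>auto simp: S1_def\<close>)
    then have "M = \<Union>S1" "\<Union>S1 \<in> L1" unfolding M_def S1_def by auto
    then show ?thesis using nc by blast
  qed
  then obtain y0 where y0: "y0 \<in> C" "y0 \<notin> M" by blast
  have A: "\<not> (z \<in> D \<and> y \<in> D)" if "z \<in> M" "y \<notin> M" "D \<in> L1" for z y D
  proof
    assume zy: "z \<in> D \<and> y \<in> D"
    show False
    proof (cases "z = x")
      case True
      then have "D \<in> S1" using zy that unfolding S1_def by auto
      then show False using zy that unfolding M_def by auto
    next
      case False
      have "z \<in> \<Union>S1" using that(1) False unfolding M_def by auto
      then obtain D' where D': "D' \<in> L1" "x \<in> D'" "z \<in> D'" unfolding S1_def by auto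
      then have "D \<subseteq> D' \<or> D' \<subseteq> D" using lam_nested[OF lam1 \<open>D \<in> L1\<close> D'(1), of z] zy D' by blast
      then show False
      proof
        assume "D \<subseteq> D'"
        then show False using zy D' that unfolding M_def S1_def by auto
      next
        assume "D' \<subseteq> D"
        then have "D \<in> S1" using D' that unfolding S1_def by auto
        then show False using zy that unfolding M_def by auto
      qed
    qed
  qed
  have B: "\<exists>D\<in>L2. z \<in> D \<and> y \<in> D" if zy: "z \<in> M" "z \<in> C" "y \<in> C" "y \<notin> M" for z y
  proof -
    have "z \<noteq> y" using zy by auto
    then obtain D where "D \<in> L1 \<union> L2" "z \<in> D" "y \<in> D" using H zy(2,3) by blast
    then show ?thesis using A[OF zy(1) zy(4)] by blast
  qed
  define S2 where "S2 = {D\<in>L2. x \<in> D}"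
  have xM: "x \<in> M" unfolding M_def by simp
  obtain D0 where D0: "D0 \<in> L2" "x \<in> D0" "y0 \<in> D0" using B[OF xM xC y0(1) y0(2)] by blast
  have "C \<subseteq> \<Union>S2"
  proof
    fix z assume zC: "z \<in> C"
    show "z \<in> \<Union>S2"
    proof (cases "z \<in> M")
      case False
      then show ?thesis using B[OF xM xC zC False] unfolding S2_def by blast
    next
      case True
      obtain D where D: "D \<in> L2" "z \<in> D" "y0 \<in> D" using B[OF True zC y0] by blast
      have "D \<subseteq> D0 \<or> D0 \<subseteq> D" using lam_nested[OF lam2 D(1) D0(1)] D D0 by blast
      then show ?thesis using D D0 unfolding S2_def by blast
    qed
  qed
  moreover have ch2: "\<forall>A\<in>S2. \<forall>B\<in>S2. A \<subseteq> B \<or> B \<subseteq> A"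
    unfolding S2_def using lam_nested[OF lam2] by blast
  have "\<Union>S2 \<in> S2" by (rule chain_Union_mem) (use fin2 D0 ch2 in \<open>auto simp: S2_def\<close>)
  ultimately show False using nc unfolding S2_def by blast
qed


lemma indep_core:
  assumes fin1: "finite P1" and fin2: "finite P2" and lam1: "lam P1" and lam2: "lam P2"
    and cd: "\<forall>C\<in>P1 \<union> P2. 2 \<le> card C"
  shows "U \<subseteq> P1 \<union> P2 \<Longrightarrow> (\<forall>x y. x \<noteq> y \<longrightarrow> (\<Sum>C\<in>U. if x \<in> C \<and> y \<in> C then a C else 0) = (0::real))
     \<Longrightarrow> \<forall>C\<in>U. a C = 0"
proof (induction "card U" arbitrary: U rule: less_induct)
  case less
  show ?case
  proof (cases "U = {}")
    case True then show ?thesis by simp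
  next
    case False
    have finU: "finite U" using less.prems(1) fin1 fin2 finite_subset by blast
    obtain C where C: "C \<in> U" and Cmax: "\<forall>D\<in>U. C \<subseteq> D \<longrightarrow> C = D"
      using finite_has_maximal[OF finU False] by blast
    have l1: "lam ((U \<inter> P1) - {C})" by (rule lam_subset[OF lam1]) auto
    have l2: "lam ((U \<inter> P2) - {C})" by (rule lam_subset[OF lam2]) auto
    have "2 \<le> card C" using cd C less.prems(1) by blast
    moreover have "\<forall>D\<in>(U \<inter> P1 - {C}) \<union> (U \<inter> P2 - {C}). \<not> C \<subseteq> D" using Cmax by blast
    ultimately obtain x y where xy: "x \<in> C" "y \<in> C" "x \<noteq> y"
      and unc: "\<forall>D\<in>(U \<inter> P1 - {C}) \<union> (U \<inter> P2 - {C}). \<not> (x \<in> D \<and> y \<in> D)"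
      using uncovered[OF _ _ l1 l2 \<open>2 \<le> card C\<close>] fin1 fin2 by (meson finite_Diff finite_Int)
    have unc': "\<forall>D\<in>U - {C}. \<not> (x \<in> D \<and> y \<in> D)" using unc less.prems(1) by blast
    have "(\<Sum>D\<in>U. if x \<in> D \<and> y \<in> D then a D else 0) = a C + (\<Sum>D\<in>U - {C}. if x \<in> D \<and> y \<in> D then a D else 0)"
      using sum.remove[OF finU C, of "\<lambda>D. if x \<in> D \<and> y \<in> D then a D else 0"] xy by simp
    also have "(\<Sum>D\<in>U - {C}. if x \<in> D \<and> y \<in> D then a D else 0) = 0"
      using unc' by (intro sum.neutral) auto
    finally have aC: "a C = 0" using less.prems(2) xy(3) by simp
    have hyp': "\<forall>x y. x \<noteq> y \<longrightarrow> (\<Sum>D\<in>U - {C}. if x \<in> D \<and> y \<in> D then a D else 0) = 0"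
    proof (intro allI impI)
      fix u v :: nat assume "u \<noteq> v"
      have "(\<Sum>D\<in>U. if u \<in> D \<and> v \<in> D then a D else 0) = (if u \<in> C \<and> v \<in> C then a C else 0) + (\<Sum>D\<in>U - {C}. if u \<in> D \<and> v \<in> D then a D else 0)"
        using sum.remove[OF finU C, of "\<lambda>D. if u \<in> D \<and> v \<in> D then a D else 0"] by simp
      then show "(\<Sum>D\<in>U - {C}. if u \<in> D \<and> v \<in> D then a D else 0) = 0"
        using less.prems(2) \<open>u \<noteq> v\<close> aC by (simp split: if_splits)
    qed
    have "card (U - {C}) < card U" using finU C by (meson card_Diff1_less)
    then have "\<forall>D\<in>U - {C}. a D = 0" using less.hyps[OF _ _ hyp'] less.prems(1) by blast
    then show ?thesis using aC by blast
  qed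
qed


lemma rt_lam: "rooted_tree n T \<Longrightarrow> lam T"
  unfolding rooted_tree_def lam_def by blast

lemma rt_sub: "rooted_tree n T \<Longrightarrow> C \<in> T \<Longrightarrow> C \<subseteq> {1..n}"
  unfolding rooted_tree_def by blast

lemma rt_card: "rooted_tree n T \<Longrightarrow> C \<in> T \<Longrightarrow> 2 \<le> card C"
  unfolding rooted_tree_def by blast

lemma rt_fin: "rooted_tree n T \<Longrightarrow> finite T"
proof -
  assume "rooted_tree n T"
  then have "T \<subseteq> Pow {1..n}" using rt_sub by blast
  then show "finite T" by (rule finite_subset) simp
qed

lemma pc_sub: "proper_clades n T \<subseteq> T"
  unfolding proper_clades_def by blast

lemma pc_fin: "rooted_tree n T \<Longrightarrow> finite (proper_clades n T)"
  using rt_fin pc_sub finite_subset by metis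

lemma sum_charvec:
  assumes "finite A"
  shows "(\<Sum>C\<in>A. c C * (- charvec n C e)) = (if e \<in> pairs n then - (\<Sum>C\<in>{C\<in>A. e \<subseteq> C}. c C) else 0)"
proof (cases "e \<in> pairs n")
  case True
  have "(\<Sum>C\<in>A. c C * (- charvec n C e)) = (\<Sum>C\<in>A. - (if e \<subseteq> C then c C else 0))"
    by (intro sum.cong) (auto simp: charvec_def True)
  also have "\<dots> = - (\<Sum>C\<in>{C\<in>A. e \<subseteq> C}. c C)"
    by (simp add: sum_negf sum.inter_filter[OF assms])
  finally show ?thesis using True by simp
next
  case False
  then show ?thesis by (simp add: charvec_def)
qed

lemma ones_pairs: "ones n e = (if e \<in> pairs n then 1 else 0)"
  unfolding ones_def by simp

lemma pairs_small: "n < 2 \<Longrightarrow> pairs n = {}"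
proof -
  assume n: "n < 2"
  { fix e assume "e \<in> pairs n"
    then have "e \<subseteq> {1..n}" "card e = 2" unfolding pairs_def by auto
    then have "2 \<le> n" using card_mono[of "{1..n}" e] by simp
    then have False using n by simp }
  then show ?thesis by blast
qed

lemma tree_small: "rooted_tree n T \<Longrightarrow> n < 2 \<Longrightarrow> T = {}"
proof -
  assume rt: "rooted_tree n T" and n: "n < 2"
  { fix C assume "C \<in> T"
    then have "C \<subseteq> {1..n}" "2 \<le> card C" using rt_sub rt_card rt by auto
    then have "2 \<le> n" using card_mono[of "{1..n}" C] by simp
    then have False using n by simp }
  then show ?thesis by blast
qed

lemma chain_common:
  assumes "lam T" "S \<subseteq> T" "\<forall>D\<in>S. X \<subseteq> D" "X \<noteq> {}"
  shows "\<forall>A\<in>S. \<forall>B\<in>S. A \<subseteq> B \<or> B \<subseteq> A"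
proof (intro ballI)
  fix A B assume "A \<in> S" "B \<in> S"
  obtain x where "x \<in> X" using assms(4) by blast
  then show "A \<subseteq> B \<or> B \<subseteq> A" using lam_nested[OF assms(1), of A B x] assms \<open>A \<in> S\<close> \<open>B \<in> S\<close> by blast
qed

lemma mrca_mem:
  assumes rt: "rooted_tree n T" and e: "e \<in> pairs n"
  shows "mrca T e \<in> T" "e \<subseteq> mrca T e"
proof -
  have n2: "2 \<le> n" using e pairs_small by (metis empty_iff not_less)
  then have nT: "{1..n} \<in> T" using rt unfolding rooted_tree_def by blast
  have ene: "e \<noteq> {}" using e unfolding pairs_def by auto
  have "e \<subseteq> {1..n}" using e unfolding pairs_def by auto
  then have ne: "{C\<in>T. e \<subseteq> C} \<noteq> {}" using nT by blast
  have "\<Inter>{C\<in>T. e \<subseteq> C} \<in> {C\<in>T. e \<subseteq> C}"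
  proof (rule chain_Inter_mem)
    show "finite {C\<in>T. e \<subseteq> C}" using rt_fin[OF rt] by simp
    show "{C\<in>T. e \<subseteq> C} \<noteq> {}" by (fact ne)
    show "\<forall>A\<in>{C\<in>T. e \<subseteq> C}. \<forall>B\<in>{C\<in>T. e \<subseteq> C}. A \<subseteq> B \<or> B \<subseteq> A"
      by (rule chain_common[OF rt_lam[OF rt] _ _ ene]) auto
  qed
  then show "mrca T e \<in> T" "e \<subseteq> mrca T e" unfolding mrca_def by auto
qed


definition par :: "nat set set \<Rightarrow> nat set \<Rightarrow> nat set" where
  "par T X = \<Inter>{D\<in>T. X \<subset> D}"

lemma par_mem:
  assumes rt: "rooted_tree n T" and X: "X \<in> T" "X \<noteq> {1..n}"
  shows "par T X \<in> T" "X \<subset> par T X"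
proof -
  have Xs: "X \<subseteq> {1..n}" "2 \<le> card X" using rt_sub[OF rt X(1)] rt_card[OF rt X(1)] by auto
  then have "X \<noteq> {}" by auto
  have "2 \<le> n" using Xs card_mono[of "{1..n}" X] by simp
  then have nT: "{1..n} \<in> T" using rt unfolding rooted_tree_def by blast
  then have ne: "{D\<in>T. X \<subset> D} \<noteq> {}" using Xs X(2) by blast
  have "\<Inter>{D\<in>T. X \<subset> D} \<in> {D\<in>T. X \<subset> D}"
  proof (rule chain_Inter_mem)
    show "finite {D\<in>T. X \<subset> D}" using rt_fin[OF rt] by simp
    show "{D\<in>T. X \<subset> D} \<noteq> {}" by (fact ne)
    show "\<forall>A\<in>{D\<in>T. X \<subset> D}. \<forall>B\<in>{D\<in>T. X \<subset> D}. A \<subseteq> B \<or> B \<subseteq> A"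
      by (rule chain_common[OF rt_lam[OF rt] _ _ \<open>X \<noteq> {}\<close>]) auto
  qed
  then show "par T X \<in> T" "X \<subset> par T X" unfolding par_def by auto
qed

lemma telescope:
  fixes w :: "nat set \<Rightarrow> real"
  assumes rt: "rooted_tree n T" and X: "X \<in> T"
  shows "w X = w {1..n} - (\<Sum>C\<in>{C\<in>proper_clades n T. X \<subseteq> C}. w (par T C) - w C)"
  using X
proof (induction "n - card X" arbitrary: X rule: less_induct)
  case less
  let ?P = "proper_clades n T"
  have finP: "finite ?P" using pc_fin[OF rt] .
  have Xs: "X \<subseteq> {1..n}" using rt_sub[OF rt less.prems] .
  show ?case
  proof (cases "X = {1..n}")
    case True
    have E: "{C\<in>?P. X \<subseteq> C} = {}"
    proof -
      { fix C assume "C \<in> ?P" "X \<subseteq> C"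
        then have "C \<subseteq> {1..n}" "C \<noteq> {1..n}" using rt_sub[OF rt] unfolding proper_clades_def by auto
        then have False using \<open>X \<subseteq> C\<close> True by auto }
      then show ?thesis by blast
    qed
    show ?thesis unfolding E using True by simp
  next
    case False
    let ?Y = "par T X"
    have Y: "?Y \<in> T" "X \<subset> ?Y" using par_mem[OF rt less.prems False] by auto
    have Ys: "?Y \<subseteq> {1..n}" using rt_sub[OF rt Y(1)] .
    have "card X < card ?Y" using Y(2) Ys by (meson finite_atLeastAtMost finite_subset psubset_card_mono)
    moreover have "card ?Y \<le> n" using card_mono[OF _ Ys] by simp
    ultimately have lt: "n - card ?Y < n - card X" by simp
    have XP: "X \<in> ?P" using less.prems False unfolding proper_clades_def by auto
    have seteq: "{C\<in>?P. X \<subseteq> C} = insert X {C\<in>?P. ?Y \<subseteq> C}"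
    proof
      show "{C\<in>?P. X \<subseteq> C} \<subseteq> insert X {C\<in>?P. ?Y \<subseteq> C}"
      proof
        fix C assume C: "C \<in> {C\<in>?P. X \<subseteq> C}"
        show "C \<in> insert X {C\<in>?P. ?Y \<subseteq> C}"
        proof (cases "C = X")
          case True then show ?thesis by simp
        next
          case False
          then have "C \<in> {D\<in>T. X \<subset> D}" using C pc_sub by blast
          then have "?Y \<subseteq> C" unfolding par_def by (rule Inter_lower)
          then show ?thesis using C by simp
        qed
      qed
      show "insert X {C\<in>?P. ?Y \<subseteq> C} \<subseteq> {C\<in>?P. X \<subseteq> C}" using XP Y(2) by auto
    qed
    have Xn: "X \<notin> {C\<in>?P. ?Y \<subseteq> C}" using Y(2) by auto
    have "(\<Sum>C\<in>{C\<in>?P. X \<subseteq> C}. w (par T C) - w C) = (w ?Y - w X) + (\<Sum>C\<in>{C\<in>?P. ?Y \<subseteq> C}. w (par T C) - w C)"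
      unfolding seteq using finP Xn by (simp add: sum.insert)
    moreover have "w ?Y = w {1..n} - (\<Sum>C\<in>{C\<in>?P. ?Y \<subseteq> C}. w (par T C) - w C)"
      using less.hyps[OF lt Y(1)] .
    ultimately show ?thesis by simp
  qed
qed


lemma K_char:
  assumes rt: "rooted_tree n T"
  shows "K n T = {(\<lambda>e. t * ones n e + (\<Sum>C\<in>proper_clades n T. c C * (- charvec n C e))) | t c.
                    \<forall>C\<in>proper_clades n T. 0 \<le> c C}"
    (is "_ = ?R")
proof
  let ?P = "proper_clades n T"
  have finP: "finite ?P" using pc_fin[OF rt] .
  show "?R \<subseteq> K n T"
  proof
    fix \<delta> assume "\<delta> \<in> ?R"
    then obtain t c where c: "\<forall>C\<in>?P. 0 \<le> c C"
      and d: "\<delta> = (\<lambda>e. t * ones n e + (\<Sum>C\<in>?P. c C * (- charvec n C e)))" by blast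
    have dv: "\<delta> e = (if e \<in> pairs n then t - (\<Sum>C\<in>{C\<in>?P. e \<subseteq> C}. c C) else 0)" for e
      unfolding d sum_charvec[OF finP] ones_pairs by simp
    define w where "w D = t - (\<Sum>C\<in>{C\<in>?P. D \<subseteq> C}. c C)" for D
    have "\<delta> \<in> vec_space n" unfolding vec_space_def using dv by simp
    moreover have "\<forall>C\<in>T. \<forall>D\<in>T. C \<subseteq> D \<longrightarrow> w C \<le> w D"
    proof (intro ballI impI)
      fix C D assume "C \<in> T" "D \<in> T" "C \<subseteq> D"
      have "(\<Sum>E\<in>{E\<in>?P. D \<subseteq> E}. c E) \<le> (\<Sum>E\<in>{E\<in>?P. C \<subseteq> E}. c E)"
        by (rule sum_mono2) (use finP c \<open>C \<subseteq> D\<close> in auto)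
      then show "w C \<le> w D" unfolding w_def by simp
    qed
    moreover have "\<forall>e\<in>pairs n. \<delta> e = w (mrca T e)"
    proof
      fix e assume e: "e \<in> pairs n"
      have "{C\<in>?P. e \<subseteq> C} = {C\<in>?P. mrca T e \<subseteq> C}"
      proof (intro Collect_cong conj_cong refl iffI)
        fix C assume "C \<in> ?P" "e \<subseteq> C"
        then show "mrca T e \<subseteq> C" unfolding mrca_def using pc_sub by blast
      next
        fix C assume "mrca T e \<subseteq> C"
        then show "e \<subseteq> C" using mrca_mem(2)[OF rt e] by blast
      qed
      then show "\<delta> e = w (mrca T e)" unfolding dv w_def using e by simp
    qed
    ultimately show "\<delta> \<in> K n T" unfolding K_def by blast
  qed
  show "K n T \<subseteq> ?R"
  proof
    fix \<delta> assume "\<delta> \<in> K n T"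
    then obtain w :: "nat set \<Rightarrow> real" where dv: "\<delta> \<in> vec_space n"
      and mono: "\<forall>C\<in>T. \<forall>D\<in>T. C \<subseteq> D \<longrightarrow> w C \<le> w D"
      and dw: "\<forall>e\<in>pairs n. \<delta> e = w (mrca T e)" unfolding K_def by blast
    define c where "c C = w (par T C) - w C" for C
    have c0: "\<forall>C\<in>?P. 0 \<le> c C"
    proof
      fix C assume "C \<in> ?P"
      then have "C \<in> T" "C \<noteq> {1..n}" unfolding proper_clades_def by auto
      then show "0 \<le> c C" using par_mem[OF rt] mono unfolding c_def by (meson diff_ge_0_iff_ge psubset_imp_subset)
    qed
    have "\<delta> = (\<lambda>e. w {1..n} * ones n e + (\<Sum>C\<in>?P. c C * (- charvec n C e)))"
    proof
      fix e
      show "\<delta> e = w {1..n} * ones n e + (\<Sum>C\<in>?P. c C * (- charvec n C e))"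
      proof (cases "e \<in> pairs n")
        case False
        then show ?thesis using dv unfolding vec_space_def sum_charvec[OF finP] ones_pairs by simp
      next
        case e: True
        have m: "mrca T e \<in> T" "e \<subseteq> mrca T e" using mrca_mem[OF rt e] by auto
        have "{C\<in>?P. e \<subseteq> C} = {C\<in>?P. mrca T e \<subseteq> C}"
        proof (intro Collect_cong conj_cong refl iffI)
          fix C assume "C \<in> ?P" "e \<subseteq> C"
          then show "mrca T e \<subseteq> C" unfolding mrca_def using pc_sub by blast
        next
          fix C assume "mrca T e \<subseteq> C"
          then show "e \<subseteq> C" using m(2) by blast
        qed
        moreover have "\<delta> e = w {1..n} - (\<Sum>C\<in>{C\<in>?P. mrca T e \<subseteq> C}. c C)"
          using dw e telescope[OF rt m(1), of w] unfolding c_def by simp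
        ultimately show ?thesis unfolding sum_charvec[OF finP] ones_pairs using e by simp
      qed
    qed
    then show "\<delta> \<in> ?R" using c0 by blast
  qed
qed


lemma sum_if_sub:
  fixes f :: "'a \<Rightarrow> real"
  assumes "finite U" "A \<subseteq> U"
  shows "(\<Sum>C\<in>U. if C \<in> A then f C else 0) = (\<Sum>C\<in>A. f C)"
proof -
  have "(\<Sum>C\<in>U. if C \<in> A then f C else 0) = (\<Sum>C\<in>{C\<in>U. C \<in> A}. f C)"
    using sum.inter_filter[OF assms(1), of f "\<lambda>C. C \<in> A"] by simp
  also have "{C\<in>U. C \<in> A} = A" using assms(2) by blast
  finally show ?thesis .
qed

theorem corollary3p9:
  fixes n :: nat and T1 T2 :: "nat set set"
  assumes "rooted_tree n T1" and "rooted_tree n T2"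
  shows "minkowski_sum (K n T1) (K n T2) =
           minkowski_sum {(\<lambda>e. t * ones n e) | t. True}
             (cone_gen (proper_clades n T1 \<union> proper_clades n T2) (\<lambda>C. - charvec n C))
       \<and> (\<forall>(a :: nat set \<Rightarrow> real) (t :: real).
            (\<forall>e. (\<Sum>C\<in>proper_clades n T1 \<union> proper_clades n T2. a C * (- charvec n C e)) = t * ones n e)
            \<longrightarrow> (\<forall>C\<in>proper_clades n T1 \<union> proper_clades n T2. a C = 0))"
proof
  let ?P1 = "proper_clades n T1" and ?P2 = "proper_clades n T2"
  let ?U = "?P1 \<union> ?P2"
  have f1: "finite ?P1" using pc_fin[OF assms(1)] .
  have f2: "finite ?P2" using pc_fin[OF assms(2)] .
  have fU: "finite ?U" using f1 f2 by simp
  show "minkowski_sum (K n T1) (K n T2) =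
           minkowski_sum {(\<lambda>e. t * ones n e) | t. True} (cone_gen ?U (\<lambda>C. - charvec n C))"
  proof
    show "minkowski_sum (K n T1) (K n T2) \<subseteq> minkowski_sum {(\<lambda>e. t * ones n e) | t. True} (cone_gen ?U (\<lambda>C. - charvec n C))"
    proof
      fix z assume "z \<in> minkowski_sum (K n T1) (K n T2)"
      then obtain x y where z: "z = (\<lambda>e. x e + y e)" and x: "x \<in> K n T1" and y: "y \<in> K n T2"
        unfolding minkowski_sum_def by blast
      obtain t1 c1 where c1: "\<forall>C\<in>?P1. 0 \<le> c1 C"
        and xd: "x = (\<lambda>e. t1 * ones n e + (\<Sum>C\<in>?P1. c1 C * (- charvec n C e)))"
        using x unfolding K_char[OF assms(1)] by blast
      obtain t2 c2 where c2: "\<forall>C\<in>?P2. 0 \<le> c2 C"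
        and yd: "y = (\<lambda>e. t2 * ones n e + (\<Sum>C\<in>?P2. c2 C * (- charvec n C e)))"
        using y unfolding K_char[OF assms(2)] by blast
      define c where "c C = (if C \<in> ?P1 then c1 C else 0) + (if C \<in> ?P2 then c2 C else 0)" for C
      have c0: "\<forall>C\<in>?U. 0 \<le> c C" unfolding c_def using c1 c2 by auto
      have sumeq: "(\<Sum>C\<in>?U. c C * (- charvec n C e)) =
          (\<Sum>C\<in>?P1. c1 C * (- charvec n C e)) + (\<Sum>C\<in>?P2. c2 C * (- charvec n C e))" for e
      proof -
        have "(\<Sum>C\<in>?U. c C * (- charvec n C e)) =
           (\<Sum>C\<in>?U. if C \<in> ?P1 then c1 C * (- charvec n C e) else 0) +
           (\<Sum>C\<in>?U. if C \<in> ?P2 then c2 C * (- charvec n C e) else 0)"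
          unfolding c_def sum.distrib[symmetric] by (intro sum.cong) (auto simp: algebra_simps)
        also have "\<dots> = (\<Sum>C\<in>?P1. c1 C * (- charvec n C e)) + (\<Sum>C\<in>?P2. c2 C * (- charvec n C e))"
          using sum_if_sub[OF fU, of ?P1] sum_if_sub[OF fU, of ?P2] by simp
        finally show ?thesis .
      qed
      have "z = (\<lambda>e. (\<lambda>e. (t1 + t2) * ones n e) e + (\<lambda>e. \<Sum>C\<in>?U. c C * (\<lambda>C. - charvec n C) C e) e)"
        unfolding z xd yd using sumeq by (simp add: algebra_simps)
      moreover have "(\<lambda>e. \<Sum>C\<in>?U. c C * (\<lambda>C. - charvec n C) C e) \<in> cone_gen ?U (\<lambda>C. - charvec n C)"
        unfolding cone_gen_def using c0 by blast
      ultimately show "z \<in> minkowski_sum {(\<lambda>e. t * ones n e) | t. True} (cone_gen ?U (\<lambda>C. - charvec n C))"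
        unfolding minkowski_sum_def mem_Collect_eq
        by (intro exI[where x="\<lambda>e. (t1 + t2) * ones n e"] exI[where x="\<lambda>e. \<Sum>C\<in>?U. c C * (- charvec n C e)"]) auto
    qed
    show "minkowski_sum {(\<lambda>e. t * ones n e) | t. True} (cone_gen ?U (\<lambda>C. - charvec n C)) \<subseteq> minkowski_sum (K n T1) (K n T2)"
    proof
      fix z assume "z \<in> minkowski_sum {(\<lambda>e. t * ones n e) | t. True} (cone_gen ?U (\<lambda>C. - charvec n C))"
      then obtain t c where c0: "\<forall>C\<in>?U. 0 \<le> c C"
        and z: "z = (\<lambda>e. t * ones n e + (\<Sum>C\<in>?U. c C * (- charvec n C e)))"
        unfolding minkowski_sum_def cone_gen_def by auto
      define c2 where "c2 C = (if C \<in> ?P1 then 0 else c C)" for C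
      define x where "x = (\<lambda>e. t * ones n e + (\<Sum>C\<in>?P1. c C * (- charvec n C e)))"
      define y where "y = (\<lambda>e. 0 * ones n e + (\<Sum>C\<in>?P2. c2 C * (- charvec n C e)))"
      have x: "x \<in> K n T1" unfolding K_char[OF assms(1)] x_def using c0 by blast
      have c20: "\<forall>C\<in>?P2. 0 \<le> c2 C" unfolding c2_def using c0 by auto
      have y: "y \<in> K n T2" unfolding K_char[OF assms(2)] y_def using c20 by blast
      have sumeq: "(\<Sum>C\<in>?U. c C * (- charvec n C e)) =
          (\<Sum>C\<in>?P1. c C * (- charvec n C e)) + (\<Sum>C\<in>?P2. c2 C * (- charvec n C e))" for e
      proof -
        have "(\<Sum>C\<in>?P2. c2 C * (- charvec n C e)) = (\<Sum>C\<in>?P2. if C \<in> ?P2 - ?P1 then c C * (- charvec n C e) else 0)"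
          unfolding c2_def by (intro sum.cong) auto
        also have "\<dots> = (\<Sum>C\<in>?P2 - ?P1. c C * (- charvec n C e))"
          by (rule sum_if_sub[OF f2]) auto
        finally have A: "(\<Sum>C\<in>?P2. c2 C * (- charvec n C e)) = (\<Sum>C\<in>?P2 - ?P1. c C * (- charvec n C e))" .
        have "?U = ?P1 \<union> (?P2 - ?P1)" by blast
        then have "(\<Sum>C\<in>?U. c C * (- charvec n C e)) = (\<Sum>C\<in>?P1 \<union> (?P2 - ?P1). c C * (- charvec n C e))" by simp
        also have "\<dots> = (\<Sum>C\<in>?P1. c C * (- charvec n C e)) + (\<Sum>C\<in>?P2 - ?P1. c C * (- charvec n C e))"
          by (rule sum.union_disjoint) (use f1 f2 in auto)
        finally show ?thesis using A by simp
      qed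
      have "z = (\<lambda>e. x e + y e)" unfolding z x_def y_def using sumeq by (simp add: algebra_simps)
      then show "z \<in> minkowski_sum (K n T1) (K n T2)" unfolding minkowski_sum_def using x y by blast
    qed
  qed
next
  let ?P1 = "proper_clades n T1" and ?P2 = "proper_clades n T2"
  let ?U = "?P1 \<union> ?P2"
  have f1: "finite ?P1" using pc_fin[OF assms(1)] .
  have f2: "finite ?P2" using pc_fin[OF assms(2)] .
  have fU: "finite ?U" using f1 f2 by simp
  have l1: "lam ?P1" using lam_subset[OF rt_lam[OF assms(1)] pc_sub] .
  have l2: "lam ?P2" using lam_subset[OF rt_lam[OF assms(2)] pc_sub] .
  have Usub: "\<forall>C\<in>?U. C \<subseteq> {1..n} \<and> C \<noteq> {1..n}"
    using rt_sub[OF assms(1)] rt_sub[OF assms(2)] pc_sub unfolding proper_clades_def by blast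
  have Ucard: "\<forall>C\<in>?U. 2 \<le> card C"
    using rt_card[OF assms(1)] rt_card[OF assms(2)] pc_sub by blast
  show "\<forall>(a :: nat set \<Rightarrow> real) (t :: real).
            (\<forall>e. (\<Sum>C\<in>?U. a C * (- charvec n C e)) = t * ones n e)
            \<longrightarrow> (\<forall>C\<in>?U. a C = 0)"
  proof (intro allI impI)
    fix a :: "nat set \<Rightarrow> real" and t :: real
    assume h: "\<forall>e. (\<Sum>C\<in>?U. a C * (- charvec n C e)) = t * ones n e"
    have hp: "t = - (\<Sum>C\<in>{C\<in>?U. e \<subseteq> C}. a C)" if "e \<in> pairs n" for e
      using h[rule_format, of e] that unfolding sum_charvec[OF fU] ones_pairs by simp
    show "\<forall>C\<in>?U. a C = 0"
    proof (cases "n < 2")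
      case True
      then have "T1 = {}" "T2 = {}" using tree_small assms by auto
      then show ?thesis unfolding proper_clades_def by simp
    next
      case False
      have cn: "2 \<le> card {1..n}" using False by simp
      obtain x y where xy: "x \<in> {1..n}" "y \<in> {1..n}" "x \<noteq> y" and unc: "\<forall>D\<in>?P1 \<union> ?P2. \<not> (x \<in> D \<and> y \<in> D)"
        using uncovered[OF f1 f2 l1 l2 cn] Usub by blast
      have xyp: "{x, y} \<in> pairs n" using xy unfolding pairs_def by auto
      have E: "{C\<in>?U. {x, y} \<subseteq> C} = {}" using unc by auto
      have "t = - (\<Sum>C\<in>{C\<in>?U. {x, y} \<subseteq> C}. a C)" by (rule hp[OF xyp])
      then have t0: "t = 0" unfolding E by simp
      have "\<forall>u v. u \<noteq> v \<longrightarrow> (\<Sum>C\<in>?U. if u \<in> C \<and> v \<in> C then a C else 0) = 0"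
      proof (intro allI impI)
        fix u v :: nat assume uv: "u \<noteq> v"
        have eq: "(\<Sum>C\<in>?U. if u \<in> C \<and> v \<in> C then a C else 0) = (\<Sum>C\<in>{C\<in>?U. {u, v} \<subseteq> C}. a C)"
          using sum.inter_filter[OF fU, of a "\<lambda>C. {u, v} \<subseteq> C"] by simp
        show "(\<Sum>C\<in>?U. if u \<in> C \<and> v \<in> C then a C else 0) = 0"
        proof (cases "u \<in> {1..n} \<and> v \<in> {1..n}")
          case True
          then have "{u, v} \<in> pairs n" using uv unfolding pairs_def by auto
          then have "t = - (\<Sum>C\<in>{C\<in>?U. {u, v} \<subseteq> C}. a C)" by (rule hp)
          then show ?thesis unfolding eq using t0 by linarith
        next
          case False
          then have E2: "{C\<in>?U. {u, v} \<subseteq> C} = {}" using Usub by blast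
          show ?thesis unfolding eq E2 by simp
        qed
      qed
      then show ?thesis using indep_core[OF f1 f2 l1 l2 Ucard, of ?U a] by blast
    qed
  qed
qed

end
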